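(* Let $\mathcal{K}$ be a field with a nonarchimedean valuation and let $B\in\mathcal{K}^{n\times n}$ be an upper triangular matrix such that $\nu(\det B(\{1,\dots,|S|\},S))\in\mathbb{R}$ for all $S\subseteq[n]$ and the function $2^{[n]}\to\mathbb{R}$, $S\mapsto \nu(\det B(\{1,\dots,|S|\},S))$, is submodular. Then \[ \nu(\det B(\{1,\dots,|S|\},S))\;\ge\;\nu(\det B(T,S)) \] for all $S,T\subseteq[n]$ with $|S|=|T|$.
   Context: $\nu=-\mathrm{val}$ is the negative of the valuation, extended by $\nu(0)=-\infty$. $B(T,S)$ is the submatrix with rows $T$ and columns $S$, and the determinant of the empty matrix is $1$. A function $F:2^{[n]}\to\mathbb{R}$ is submodular if $F(S\cap T)+F(S\cup T)\le F(S)+F(T)$ for all $S,T$. *)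

theory Defs
  imports "HOL-Library.Extended_Real" "Jordan_Normal_Form.Determinant" "Jordan_Normal_Form.DL_Submatrix"
begin

definition nonarch_valuation :: "('a::field \<Rightarrow> ereal) \<Rightarrow> bool" where
  "nonarch_valuation val \<longleftrightarrow>
     (\<forall>x. val x = \<infinity> \<longleftrightarrow> x = 0) \<and>
     (\<forall>x. val x \<noteq> -\<infinity>) \<and>
     (\<forall>x y. val (x * y) = val x + val y) \<and>
     (\<forall>x y. min (val x) (val y) \<le> val (x + y))"

text \<open>nu = - val, so nu 0 = -\<infinity>.\<close>
definition nu :: "('a \<Rightarrow> ereal) \<Rightarrow> 'a \<Rightarrow> ereal" where
  "nu val x = - val x"

text \<open>Submodularity of F : 2^[n] \<rightarrow> R, with [n] = {0..<n} (0-based indexing).\<close>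
definition submodular_on :: "nat \<Rightarrow> (nat set \<Rightarrow> real) \<Rightarrow> bool" where
  "submodular_on n F \<longleftrightarrow>
     (\<forall>S T. S \<subseteq> {0..<n} \<longrightarrow> T \<subseteq> {0..<n} \<longrightarrow> F (S \<inter> T) + F (S \<union> T) \<le> F S + F T)"

end

theory Submission
  imports Defs
begin


lemma pick_ge: "i < card X \<Longrightarrow> i \<le> pick X i"
proof (induction i)
  case 0 thus ?case by simp
next
  case (Suc i)
  have "pick X i < pick X (Suc i)" using pick_mono[of "Suc i" X i] Suc.prems by blast
  thus ?case using Suc by simp
qed

lemma smono_le: fixes g :: "nat \<Rightarrow> nat" assumes sm: "strict_mono_on {0..<k} g" and "a \<le> b" "b < k" shows "g a \<le> g b"
proof (cases "a = b")
  case False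
  hence "a < b" using assms(2) by simp
  have "g a < g b" using sm \<open>a < b\<close> \<open>b < k\<close> unfolding strict_mono_on_def by simp
  thus ?thesis by simp
qed simp

lemma pick_smono_image:
  assumes sm: "strict_mono_on {0..<k} g" and l: "l < k"
  shows "pick (g ` {0..<k}) l = g l"
  using l
proof (induction l)
  case 0
  show ?case unfolding pick.simps
  proof (rule Least_equality)
    show "g 0 \<in> g ` {0..<k}" using 0 by auto
    fix y assume "y \<in> g ` {0..<k}"
    then obtain m where m: "m < k" "y = g m" by auto
    show "g 0 \<le> y" using smono_le[OF sm, of 0 m] m by simp
  qed
next
  case (Suc l)
  hence IH: "pick (g ` {0..<k}) l = g l" by simp
  show ?case unfolding pick.simps IH
  proof (rule Least_equality)
    show "g (Suc l) \<in> g ` {0..<k} \<and> g l < g (Suc l)"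
      using Suc.prems sm unfolding strict_mono_on_def by auto
    fix y assume "y \<in> g ` {0..<k} \<and> g l < y"
    then obtain m where m: "m < k" "y = g m" "g l < g m" by auto
    have "\<not> m \<le> l"
    proof
      assume "m \<le> l"
      hence "g m \<le> g l" using smono_le[OF sm, of m l] Suc.prems by simp
      thus False using m by simp
    qed
    hence "Suc l \<le> m" by simp
    thus "g (Suc l) \<le> y" using smono_le[OF sm, of "Suc l" m] m by simp
  qed
qed

lemma pick_image: assumes "finite X" shows "pick X ` {0..<card X} = X"
proof -
  have sub: "pick X ` {0..<card X} \<subseteq> X" using pick_in_set by auto
  have sm: "strict_mono_on {0..<card X} (pick X)"
    unfolding strict_mono_on_def by (auto intro: pick_mono)
  have "inj_on (pick X) {0..<card X}"
    using strict_mono_on_imp_inj_on[OF sm] .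
  hence "card (pick X ` {0..<card X}) = card X" by (simp add: card_image)
  thus ?thesis using card_subset_eq[OF assms sub] by simp
qed
lemma sub_card: assumes "T \<subseteq> {0..<n}" shows "{i. i < n \<and> i \<in> T} = T"
  using assms by auto

lemma sub_carrier:
  assumes B: "B \<in> carrier_mat n n" and T: "T \<subseteq> {0..<n}" and S: "S \<subseteq> {0..<n}"
  shows "submatrix B T S \<in> carrier_mat (card T) (card S)"
  using B T S unfolding carrier_mat_def by (auto simp: dim_submatrix sub_card)

lemma sub_index:
  assumes B: "B \<in> carrier_mat n n" and T: "T \<subseteq> {0..<n}" and S: "S \<subseteq> {0..<n}"
    and i: "i < card T" and l: "l < card S"
  shows "submatrix B T S $$ (i,l) = B $$ (pick T i, pick S l)"
  using B T S i l by (intro submatrix_index) (auto simp: sub_card)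

lemma det_row_lin:
  assumes A: "A \<in> carrier_mat k k" and A1: "A1 \<in> carrier_mat k k" and A2: "A2 \<in> carrier_mat k k"
    and p: "p < k"
    and oth: "\<And>i l. i < k \<Longrightarrow> l < k \<Longrightarrow> i \<noteq> p \<Longrightarrow> A $$ (i,l) = A1 $$ (i,l) \<and> A2 $$ (i,l) = A1 $$ (i,l)"
    and rp: "\<And>l. l < k \<Longrightarrow> A $$ (p,l) = A1 $$ (p,l) + c * A2 $$ (p,l)"
  shows "det A = det A1 + c * det A2"
proof -
  let ?P = "{p. p permutes {0..<k}}"
  have fin: "finite {0..<k}" and pk: "p \<in> {0..<k}" using p by auto
  have "det A = (\<Sum>q\<in>?P. signof q * (\<Prod>i = 0..<k. A $$ (i, q i)))" by (rule det_def'[OF A])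
  also have "\<dots> = (\<Sum>q\<in>?P. signof q * (\<Prod>i = 0..<k. A1 $$ (i, q i)) + c * (signof q * (\<Prod>i = 0..<k. A2 $$ (i, q i))))"
  proof (rule sum.cong[OF refl])
    fix q assume "q \<in> ?P"
    hence q: "q permutes {0..<k}" by simp
    have qi: "\<And>i. i < k \<Longrightarrow> q i < k" using q by (meson atLeastLessThan_iff permutes_in_image zero_le)
    have e1: "(\<Prod>i = 0..<k. A $$ (i, q i)) = A $$ (p, q p) * (\<Prod>i \<in> {0..<k} - {p}. A $$ (i, q i))"
      by (rule prod.remove[OF fin pk])
    have e2: "(\<Prod>i = 0..<k. A1 $$ (i, q i)) = A1 $$ (p, q p) * (\<Prod>i \<in> {0..<k} - {p}. A1 $$ (i, q i))"
      by (rule prod.remove[OF fin pk])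
    have e3: "(\<Prod>i = 0..<k. A2 $$ (i, q i)) = A2 $$ (p, q p) * (\<Prod>i \<in> {0..<k} - {p}. A2 $$ (i, q i))"
      by (rule prod.remove[OF fin pk])
    have r1: "(\<Prod>i \<in> {0..<k} - {p}. A $$ (i, q i)) = (\<Prod>i \<in> {0..<k} - {p}. A1 $$ (i, q i))"
      by (rule prod.cong[OF refl]) (use oth qi in auto)
    have r2: "(\<Prod>i \<in> {0..<k} - {p}. A2 $$ (i, q i)) = (\<Prod>i \<in> {0..<k} - {p}. A1 $$ (i, q i))"
      by (rule prod.cong[OF refl]) (use oth qi in auto)
    show "signof q * (\<Prod>i = 0..<k. A $$ (i, q i)) = signof q * (\<Prod>i = 0..<k. A1 $$ (i, q i)) + c * (signof q * (\<Prod>i = 0..<k. A2 $$ (i, q i)))"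
      unfolding e1 e2 e3 r1 r2 rp[OF qi[OF p]] by (simp add: algebra_simps)
  qed
  also have "\<dots> = det A1 + c * det A2"
    unfolding det_def'[OF A1] det_def'[OF A2] sum.distrib sum_distrib_left by simp
  finally show ?thesis .
qed



lemma val_zero: "nonarch_valuation val \<Longrightarrow> val 0 = \<infinity>"
  unfolding nonarch_valuation_def by auto

lemma val_fin: assumes V: "nonarch_valuation val" and x: "x \<noteq> 0"
  shows "val x = ereal (real_of_ereal (val x))"
proof -
  have "val x \<noteq> \<infinity>" "val x \<noteq> -\<infinity>" using V x unfolding nonarch_valuation_def by auto
  thus ?thesis by (cases "val x") auto
qed

lemma val_mult: "nonarch_valuation val \<Longrightarrow> val (x * y) = val x + val y"
  unfolding nonarch_valuation_def by auto

lemma val_one: assumes V: "nonarch_valuation val" shows "val 1 = 0"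
proof -
  obtain r where r: "val 1 = ereal r" using val_fin[OF V, of 1] by auto
  have "val 1 = val 1 + val 1" using val_mult[OF V, of 1 1] by simp
  hence "r = r + r" using r by simp
  thus ?thesis using r by simp
qed

lemma val_neg: assumes V: "nonarch_valuation val" shows "val (- x) = val x"
proof -
  obtain r where r: "val (-1) = ereal r" using val_fin[OF V, of "-1"] by auto
  have "val 1 = val (-1) + val (-1)" using val_mult[OF V, of "-1" "-1"] by simp
  hence "r + r = 0" using r val_one[OF V] by simp
  hence "val (-1) = 0" using r by simp
  thus ?thesis using val_mult[OF V, of "-1" x] by simp
qed

lemma val_add: "nonarch_valuation val \<Longrightarrow> min (val x) (val y) \<le> val (x + y)"
  unfolding nonarch_valuation_def by auto

lemma val_comb:
  assumes V: "nonarch_valuation val" and c: "0 \<le> val c"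
    and a: "v \<le> val x" and b: "v \<le> val y"
  shows "v \<le> val (x + c * y)"
proof -
  have "val y \<le> val c + val y"
  proof -
    have "val y \<noteq> -\<infinity>" using V unfolding nonarch_valuation_def by auto
    thus ?thesis using c by (cases "val c"; cases "val y") auto
  qed
  hence "v \<le> val (c * y)" using b val_mult[OF V, of c y] by simp
  hence "v \<le> min (val x) (val (c*y))" using a by simp
  thus ?thesis using val_add[OF V, of x "c*y"] by (rule order.trans)
qed

definition topm :: "'a::comm_ring_1 mat \<Rightarrow> nat set \<Rightarrow> 'a" where
  "topm B S = det (submatrix B {0..<card S} S)"

lemma tri_det:
  fixes B :: "'a::comm_ring_1 mat"
  assumes B: "B \<in> carrier_mat n n" and ut: "upper_triangular B"
    and sm: "strict_mono_on {0..<m} g" and gn: "\<And>i. i < m \<Longrightarrow> g i < n"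
    and lo: "\<And>l i. l < i \<Longrightarrow> i < m \<Longrightarrow> g l < i"
    and mn: "m \<le> n"
  shows "det (submatrix B {0..<m} (g ` {0..<m})) = prod_list (map (\<lambda>i. B $$ (i, g i)) [0..<m])"
proof -
  let ?X = "g ` {0..<m}"
  let ?A = "submatrix B {0..<m} ?X"
  have cX: "card ?X = m" using strict_mono_on_imp_inj_on[OF sm] by (simp add: card_image)
  have Xn: "?X \<subseteq> {0..<n}" using gn by auto
  have mn': "{0..<m} \<subseteq> {0..<n}" using mn by auto
  have pX: "\<And>l. l < m \<Longrightarrow> pick ?X l = g l" using pick_smono_image[OF sm] by simp
  have pm: "\<And>i. i < m \<Longrightarrow> pick {0..<m} i = i"
    using pick_smono_image[of m id] by (simp add: strict_mono_on_def)
  have A: "?A \<in> carrier_mat m m" using sub_carrier[OF B mn' Xn] cX by simp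
  have idx: "\<And>i l. i < m \<Longrightarrow> l < m \<Longrightarrow> ?A $$ (i,l) = B $$ (i, g l)"
    using sub_index[OF B mn' Xn] cX pX pm by simp
  have "upper_triangular ?A"
  proof (rule upper_triangularI)
    fix i l assume "l < i" "i < dim_row ?A"
    hence "i < m" "l < m" using A by auto
    have gl: "g l < i" using lo[OF \<open>l < i\<close> \<open>i < m\<close>] .
    have "i < dim_row B" using B \<open>i < m\<close> mn by simp
    hence "B $$ (i, g l) = 0" using upper_triangularD[OF ut gl] by simp
    thus "?A $$ (i,l) = 0" using idx[OF \<open>i < m\<close> \<open>l < m\<close>] by simp
  qed
  hence "det ?A = prod_list (diag_mat ?A)" using det_upper_triangular A by blast
  also have "\<dots> = prod_list (map (\<lambda>i. B $$ (i, g i)) [0..<m])"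
    unfolding diag_mat_def using A idx by (intro arg_cong[where f=prod_list]) auto
  finally show ?thesis .
qed

lemma base_zero:
  fixes B :: "'a::idom mat"
  assumes B: "B \<in> carrier_mat n n" and ut: "upper_triangular B"
    and T: "T \<subseteq> {0..<n}" and k: "k \<le> n" and cT: "card T = k" and ne: "T \<noteq> {0..<k}"
  shows "det (submatrix B T {0..<k}) = 0"
proof -
  let ?A = "submatrix B T {0..<k}"
  have kn: "{0..<k} \<subseteq> {0..<n}" using k by auto
  have A: "?A \<in> carrier_mat k k" using sub_carrier[OF B T kn] cT by simp
  have pm: "\<And>i. i < k \<Longrightarrow> pick {0..<k} i = i"
    using pick_smono_image[of k id] by (simp add: strict_mono_on_def)
  have idx: "\<And>i l. i < k \<Longrightarrow> l < k \<Longrightarrow> ?A $$ (i,l) = B $$ (pick T i, l)"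
    using sub_index[OF B T kn] cT pm by simp
  have pT: "\<And>i. i < k \<Longrightarrow> pick T i < n"
  proof -
    fix i assume "i < k"
    hence "pick T i \<in> T" using pick_in_set[of i T] cT by simp
    thus "pick T i < n" using T by auto
  qed
  have ut': "upper_triangular ?A"
  proof (rule upper_triangularI)
    fix i l assume "l < i" "i < dim_row ?A"
    hence il: "i < k" "l < k" using A by auto
    have "l < pick T i" using pick_ge[of i T] il cT \<open>l < i\<close> by simp
    have "pick T i < dim_row B" using B pT[OF il(1)] by simp
    hence "B $$ (pick T i, l) = 0" using upper_triangularD[OF ut \<open>l < pick T i\<close>] by simp
    thus "?A $$ (i,l) = 0" using idx[OF il] by simp
  qed
  have "\<exists>i<k. pick T i \<noteq> i"
  proof (rule ccontr)
    assume "\<not> ?thesis"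
    hence "\<And>i. i < k \<Longrightarrow> pick T i = i" by auto
    hence "pick T ` {0..<k} = {0..<k}" by (simp add: image_cong)
    moreover have "finite T" using T finite_subset by blast
    ultimately show False using pick_image[of T] cT ne by simp
  qed
  then obtain i where i: "i < k" "pick T i \<noteq> i" by auto
  hence "i < pick T i" using pick_ge[of i T] cT by simp
  moreover have "pick T i < dim_row B" using B pT[OF i(1)] by simp
  ultimately have "B $$ (pick T i, i) = 0" using upper_triangularD[OF ut] by simp
  hence "?A $$ (i,i) = 0" using idx[OF i(1) i(1)] by simp
  hence "0 \<in> set (diag_mat ?A)" unfolding diag_mat_def using A i by force
  hence "prod_list (diag_mat ?A) = 0" by (simp add: prod_list_zero_iff)
  thus ?thesis using det_upper_triangular[OF ut' A] by simp
qed



definition sw :: "nat \<Rightarrow> nat \<Rightarrow> nat" where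
  "sw j l = (if l = j then Suc j else if l = Suc j then j else l)"

lemma sw_sw[simp]: "sw j (sw j l) = l" unfolding sw_def by auto
lemma sw_inj: "inj (sw j)" by (rule injI) (metis sw_sw)
lemma sw_lt: "l < n \<Longrightarrow> Suc j < n \<Longrightarrow> sw j l < n" unfolding sw_def by auto
lemma sw_other: "l \<noteq> j \<Longrightarrow> l \<noteq> Suc j \<Longrightarrow> sw j l = l" unfolding sw_def by auto
lemma sw_mono: "x < y \<Longrightarrow> \<not> (x = j \<and> y = Suc j) \<Longrightarrow> sw j x < sw j y" unfolding sw_def by auto
lemma sw_image_sub: "X \<subseteq> {0..<n} \<Longrightarrow> Suc j < n \<Longrightarrow> sw j ` X \<subseteq> {0..<n}"
  using sw_lt by auto
lemma sw_image_both: assumes "j \<in> X" "Suc j \<in> X" shows "sw j ` X = X"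
proof
  show "sw j ` X \<subseteq> X" using assms unfolding sw_def by auto
  show "X \<subseteq> sw j ` X"
  proof
    fix x assume "x \<in> X"
    hence "sw j x \<in> X" using assms unfolding sw_def by auto
    moreover have "x = sw j (sw j x)" by simp
    ultimately show "x \<in> sw j ` X" by blast
  qed
qed
lemma sw_card: "card (sw j ` X) = card X"
  using inj_on_subset[OF sw_inj[of j] subset_UNIV] by (rule card_image)

lemma pick_inj: assumes "i < card T" "i' < card T" "pick T i = pick T i'" shows "i = i'"
proof (rule ccontr)
  assume "i \<noteq> i'"
  hence "i < i' \<or> i' < i" by auto
  thus False using pick_mono[of i' T i] pick_mono[of i T i'] assms by auto
qed

lemma pos_lt: fixes T :: "nat set" assumes "finite T" "x \<in> T" shows "card {a\<in>T. a < x} < card T"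
proof -
  have "x \<notin> {a\<in>T. a < x}" by simp
  hence "{a\<in>T. a < x} \<subset> T" using assms(2) by blast
  thus ?thesis using assms(1) by (rule psubset_card_mono[rotated])
qed

lemma pick_pos: fixes T :: "nat set" assumes "finite T" "x \<in> T"
  shows "card {a\<in>T. a < x} < card T" "pick T (card {a\<in>T. a < x}) = x"
  using pos_lt[OF assms] pick_card_in_set[OF assms(2)] by auto

lemma pick_sw:
  assumes fin: "finite X" and nb: "\<not> (j \<in> X \<and> Suc j \<in> X)" and l: "l < card X"
  shows "pick (sw j ` X) l = sw j (pick X l)"
proof -
  let ?g = "sw j \<circ> pick X"
  have sm: "strict_mono_on {0..<card X} ?g"
  proof (rule strict_mono_onI)
    fix a b assume ab: "a \<in> {0..<card X}" "b \<in> {0..<card X}" "a < b"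
    have lt: "pick X a < pick X b" using pick_mono[of b X a] ab by auto
    have "pick X a \<in> X" "pick X b \<in> X" using pick_in_set ab by auto
    hence "\<not> (pick X a = j \<and> pick X b = Suc j)" using nb by auto
    thus "?g a < ?g b" using sw_mono[OF lt] by simp
  qed
  have "?g ` {0..<card X} = sw j ` (pick X ` {0..<card X})" by (simp add: image_comp)
  hence "sw j ` X = ?g ` {0..<card X}" using pick_image[OF fin] by simp
  thus ?thesis using pick_smono_image[OF sm l] by simp
qed

definition EB :: "nat \<Rightarrow> 'a::comm_ring_1 mat \<Rightarrow> nat \<Rightarrow> 'a \<Rightarrow> 'a mat" where
  "EB n B j c = mat n n (\<lambda>(i,l). B $$ (i,l) - (if i = Suc j then c * B $$ (j,l) else 0))"

definition Bt :: "nat \<Rightarrow> 'a::comm_ring_1 mat \<Rightarrow> nat \<Rightarrow> 'a \<Rightarrow> 'a mat" where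
  "Bt n B j c = mat n n (\<lambda>(i,l). EB n B j c $$ (i, sw j l))"

lemma EB_carrier: "EB n B j c \<in> carrier_mat n n" unfolding EB_def by simp
lemma Bt_carrier: "Bt n B j c \<in> carrier_mat n n" unfolding Bt_def by simp
lemma EB_index: "i < n \<Longrightarrow> l < n \<Longrightarrow> EB n B j c $$ (i,l) = B $$ (i,l) - (if i = Suc j then c * B $$ (j,l) else 0)"
  unfolding EB_def by simp
lemma Bt_index: "i < n \<Longrightarrow> l < n \<Longrightarrow> Bt n B j c $$ (i,l) = EB n B j c $$ (i, sw j l)"
  unfolding Bt_def by simp

context
  fixes B :: "'a::field mat" and n j :: nat and c :: 'a and T S :: "nat set"
  assumes B: "B \<in> carrier_mat n n" and jn: "Suc j < n"
    and T: "T \<subseteq> {0..<n}" and S: "S \<subseteq> {0..<n}" and cTS: "card T = card S"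
begin

lemma finT: "finite T" using T finite_subset by blast
lemma finS: "finite S" using S finite_subset by blast

lemma pickT: "i < card T \<Longrightarrow> pick T i \<in> T \<and> pick T i < n"
  using pick_in_set[of i T] T by auto
lemma pickS: "l < card S \<Longrightarrow> pick S l \<in> S \<and> pick S l < n"
  using pick_in_set[of l S] S by auto

lemma sub_EB:
  assumes i: "i < card T" and l: "l < card T"
  shows "submatrix (EB n B j c) T S $$ (i,l) = B $$ (pick T i, pick S l) -
      (if pick T i = Suc j then c * B $$ (j, pick S l) else 0)"
proof -
  have "submatrix (EB n B j c) T S $$ (i,l) = EB n B j c $$ (pick T i, pick S l)"
    using sub_index[OF EB_carrier T S, of i l] cTS i l by simp
  also have "\<dots> = B $$ (pick T i, pick S l) - (if pick T i = Suc j then c * B $$ (j, pick S l) else 0)"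
    using EB_index[of "pick T i" n "pick S l" B j c] pickT[OF i] pickS l cTS by simp
  finally show ?thesis .
qed

lemma sub_B:
  assumes i: "i < card T" and l: "l < card T"
  shows "submatrix B T S $$ (i,l) = B $$ (pick T i, pick S l)"
  using sub_index[OF B T S, of i l] cTS i l by simp

lemma rowop_a:
  assumes nb: "\<not> (Suc j \<in> T \<and> j \<notin> T)"
  shows "det (submatrix (EB n B j c) T S) = det (submatrix B T S)"
proof -
  let ?A = "submatrix (EB n B j c) T S" and ?A1 = "submatrix B T S"
  let ?k = "card T"
  have A: "?A \<in> carrier_mat ?k ?k" using sub_carrier[OF EB_carrier T S] cTS by simp
  have A1: "?A1 \<in> carrier_mat ?k ?k" using sub_carrier[OF B T S] cTS by simp
  note iA = sub_EB and iA1 = sub_B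
  show ?thesis
  proof (cases "Suc j \<in> T")
    case False
    have "?A = ?A1"
    proof (rule eq_matI)
      fix i l assume "i < dim_row ?A1" "l < dim_col ?A1"
      hence il: "i < ?k" "l < ?k" using A1 by auto
      have "pick T i \<noteq> Suc j" using pickT[OF il(1)] False by auto
      thus "?A $$ (i,l) = ?A1 $$ (i,l)" using iA[OF il] iA1[OF il] by simp
    qed (use A A1 in auto)
    thus ?thesis by simp
  next
    case True
    hence jT: "j \<in> T" using nb by auto
    define p where "p = card {a\<in>T. a < Suc j}"
    define q where "q = card {a\<in>T. a < j}"
    have p: "p < ?k" "pick T p = Suc j" using pick_pos[OF finT True] unfolding p_def by auto
    have q: "q < ?k" "pick T q = j" using pick_pos[OF finT jT] unfolding q_def by auto
    have pq: "p \<noteq> q" using p q by auto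
    define A2 where "A2 = mat ?k ?k (\<lambda>(i,l). if i = p then ?A1 $$ (q,l) else ?A1 $$ (i,l))"
    have A2: "A2 \<in> carrier_mat ?k ?k" unfolding A2_def by simp
    have "det ?A = det ?A1 + (- c) * det A2"
    proof (rule det_row_lin[OF A A1 A2 p(1)])
      fix i l assume il: "i < ?k" "l < ?k" "i \<noteq> p"
      have "pick T i \<noteq> Suc j" using pick_inj[of i T p] il p by auto
      thus "?A $$ (i,l) = ?A1 $$ (i,l) \<and> A2 $$ (i,l) = ?A1 $$ (i,l)"
        using iA[OF il(1,2)] iA1[OF il(1,2)] il unfolding A2_def by simp
    next
      fix l assume l: "l < ?k"
      show "?A $$ (p,l) = ?A1 $$ (p,l) + - c * A2 $$ (p,l)"
        using iA[OF p(1) l] iA1[OF p(1) l] iA1[OF q(1) l] p q l unfolding A2_def by simp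
    qed
    moreover have "det A2 = 0"
    proof (rule det_identical_rows[OF A2 pq p(1) q(1)])
      show "row A2 p = row A2 q"
        by (rule eq_vecI) (use A2 pq p q in \<open>auto simp: A2_def\<close>)
    qed
    ultimately show ?thesis by simp
  qed
qed

lemma rowop_b:
  assumes jT: "j \<notin> T" and sjT: "Suc j \<in> T"
  shows "det (submatrix (EB n B j c) T S) = det (submatrix B T S) + (- c) * det (submatrix B (sw j ` T) S)"
proof -
  let ?A = "submatrix (EB n B j c) T S" and ?A1 = "submatrix B T S"
  let ?T' = "sw j ` T"
  let ?A2 = "submatrix B ?T' S"
  let ?k = "card T"
  have T': "?T' \<subseteq> {0..<n}" using sw_image_sub[OF T jn] .
  have cT': "card ?T' = ?k" by (rule sw_card)
  have A: "?A \<in> carrier_mat ?k ?k" using sub_carrier[OF EB_carrier T S] cTS by simp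
  have A1: "?A1 \<in> carrier_mat ?k ?k" using sub_carrier[OF B T S] cTS by simp
  have A2: "?A2 \<in> carrier_mat ?k ?k" using sub_carrier[OF B T' S] cTS cT' by simp
  note iA = sub_EB and iA1 = sub_B
  have pT': "\<And>i. i < ?k \<Longrightarrow> pick ?T' i = sw j (pick T i)"
    using pick_sw[OF finT] jT by simp
  have iA2: "\<And>i l. i < ?k \<Longrightarrow> l < ?k \<Longrightarrow> ?A2 $$ (i,l) = B $$ (sw j (pick T i), pick S l)"
    using sub_index[OF B T' S] cTS cT' pT' by simp
  define p where "p = card {a\<in>T. a < Suc j}"
  have p: "p < ?k" "pick T p = Suc j" using pick_pos[OF finT sjT] unfolding p_def by auto
  show ?thesis
  proof (rule det_row_lin[OF A A1 A2 p(1)])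
    fix i l assume il: "i < ?k" "l < ?k" "i \<noteq> p"
    have "pick T i \<noteq> Suc j" using pick_inj[of i T p] il p by auto
    moreover have "pick T i \<noteq> j" using pickT[OF il(1)] jT by auto
    ultimately show "?A $$ (i,l) = ?A1 $$ (i,l) \<and> ?A2 $$ (i,l) = ?A1 $$ (i,l)"
      using iA[OF il(1,2)] iA1[OF il(1,2)] iA2[OF il(1,2)] sw_other by simp
  next
    fix l assume l: "l < ?k"
    show "?A $$ (p,l) = ?A1 $$ (p,l) + - c * ?A2 $$ (p,l)"
      using iA[OF p(1) l] iA1[OF p(1) l] iA2[OF p(1) l] p by (simp add: sw_def)
  qed
qed

lemma swap_det:
  "det (submatrix (Bt n B j c) T S) = det (submatrix (EB n B j c) T (sw j ` S)) \<or>
   det (submatrix (Bt n B j c) T S) = - det (submatrix (EB n B j c) T (sw j ` S))"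
proof -
  let ?E = "EB n B j c"
  let ?k = "card T"
  have S': "sw j ` S \<subseteq> {0..<n}" using sw_image_sub[OF S jn] .
  have cS': "card (sw j ` S) = ?k" using sw_card cTS by simp
  have A: "submatrix (Bt n B j c) T S \<in> carrier_mat ?k ?k" using sub_carrier[OF Bt_carrier T S] cTS by simp
  have iA: "submatrix (Bt n B j c) T S $$ (i,l) = ?E $$ (pick T i, sw j (pick S l))" if il: "i < ?k" "l < ?k" for i l
  proof -
    have "submatrix (Bt n B j c) T S $$ (i,l) = Bt n B j c $$ (pick T i, pick S l)"
      using sub_index[OF Bt_carrier T S, of i l] cTS il by simp
    also have "\<dots> = ?E $$ (pick T i, sw j (pick S l))"
      using Bt_index[of "pick T i" n "pick S l" B j c] pickT[OF il(1)] pickS il cTS by simp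
    finally show ?thesis .
  qed
  show ?thesis
  proof (cases "j \<in> S \<and> Suc j \<in> S")
    case False
    have E': "submatrix ?E T (sw j ` S) \<in> carrier_mat ?k ?k" using sub_carrier[OF EB_carrier T S'] cS' by simp
    have iE: "submatrix ?E T (sw j ` S) $$ (i,l) = ?E $$ (pick T i, sw j (pick S l))" if il: "i < ?k" "l < ?k" for i l
    proof -
      have "submatrix ?E T (sw j ` S) $$ (i,l) = ?E $$ (pick T i, pick (sw j ` S) l)"
        using sub_index[OF EB_carrier T S', of i l] cS' il by simp
      thus ?thesis using pick_sw[OF finS False, of l] il cTS by simp
    qed
    have "submatrix (Bt n B j c) T S = submatrix ?E T (sw j ` S)"
      by (rule eq_matI) (use A E' iA iE in auto)
    thus ?thesis by simp
  next
    case True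
    hence eqS: "sw j ` S = S" using sw_image_both by blast
    define q where "q = card {a\<in>S. a < j}"
    have q: "q < ?k" "pick S q = j" using pick_pos[OF finS] True cTS unfolding q_def by auto
    have set_eq: "{a\<in>S. a < Suc j} = insert j {a\<in>S. a < j}" using True by auto
    have "card {a\<in>S. a < Suc j} = Suc q" unfolding set_eq q_def using finS by simp
    hence q1: "Suc q < ?k" "pick S (Suc q) = Suc j"
      using pick_pos[OF finS, of "Suc j"] True cTS by simp_all
    let ?A1 = "submatrix ?E T S"
    have A1: "?A1 \<in> carrier_mat ?k ?k" using sub_carrier[OF EB_carrier T S] cTS by simp
    have iA1: "?A1 $$ (i,l) = ?E $$ (pick T i, pick S l)" if il: "i < ?k" "l < ?k" for i l
      using sub_index[OF EB_carrier T S, of i l] cTS il by simp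
    have "submatrix (Bt n B j c) T S = swapcols q (Suc q) ?A1"
    proof (rule eq_matI)
      fix i l assume "i < dim_row (swapcols q (Suc q) ?A1)" "l < dim_col (swapcols q (Suc q) ?A1)"
      hence il: "i < ?k" "l < ?k" using A1 by auto
      have "sw j (pick S l) = pick S (if q = l then Suc q else if Suc q = l then q else l)"
      proof (cases "l = q \<or> l = Suc q")
        case True thus ?thesis using q q1 by (auto simp: sw_def)
      next
        case False
        hence "pick S l \<noteq> j" "pick S l \<noteq> Suc j" using pick_inj[of l S q] pick_inj[of l S "Suc q"] q q1 il cTS by auto
        thus ?thesis using False sw_other by auto
      qed
      thus "submatrix (Bt n B j c) T S $$ (i,l) = swapcols q (Suc q) ?A1 $$ (i,l)"
        using iA[OF il] iA1 il q q1 A1 by auto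
    qed (use A A1 in auto)
    hence "det (submatrix (Bt n B j c) T S) = - det ?A1"
      using det_swapcols[OF q(1) q1(1) _ A1] by simp
    thus ?thesis using eqS by simp
  qed
qed

end



definition good :: "('a::field \<Rightarrow> ereal) \<Rightarrow> nat \<Rightarrow> 'a mat \<Rightarrow> bool" where
  "good val n B \<longleftrightarrow> B \<in> carrier_mat n n \<and> upper_triangular B \<and>
     (\<forall>S. S \<subseteq> {0..<n} \<longrightarrow> topm B S \<noteq> 0) \<and>
     (\<forall>S T. S \<subseteq> {0..<n} \<longrightarrow> T \<subseteq> {0..<n} \<longrightarrow>
        val (topm B S) + val (topm B T) \<le> val (topm B (S \<inter> T)) + val (topm B (S \<union> T)))"

lemma card_le_n: "X \<subseteq> {0..<n} \<Longrightarrow> card X \<le> n"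
  using card_mono[of "{0..<n}" X] by simp

lemma top_Bt:
  fixes B :: "'a::field mat"
  assumes B: "B \<in> carrier_mat n n" and jn: "Suc j < n" and X: "X \<subseteq> {0..<n}"
  shows "topm (Bt n B j c) X = topm B (sw j ` X) \<or> topm (Bt n B j c) X = - topm B (sw j ` X)"
proof -
  let ?k = "card X"
  have kn: "{0..<?k} \<subseteq> {0..<n}" using card_le_n[OF X] by auto
  have X': "sw j ` X \<subseteq> {0..<n}" using sw_image_sub[OF X jn] .
  have ck: "card (sw j ` X) = ?k" by (rule sw_card)
  have 1: "det (submatrix (Bt n B j c) {0..<?k} X) = det (submatrix (EB n B j c) {0..<?k} (sw j ` X)) \<or>
    det (submatrix (Bt n B j c) {0..<?k} X) = - det (submatrix (EB n B j c) {0..<?k} (sw j ` X))"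
    by (rule swap_det[OF B jn kn X]) simp
  have 2: "det (submatrix (EB n B j c) {0..<?k} (sw j ` X)) = det (submatrix B {0..<?k} (sw j ` X))"
    by (rule rowop_a[OF B jn kn X']) (use ck in auto)
  show ?thesis using 1 2 ck unfolding topm_def by simp
qed

lemma top_diag:
  fixes B :: "'a::field mat"
  assumes B: "B \<in> carrier_mat n n" and ut: "upper_triangular B" and m: "m \<le> n"
  shows "topm B {0..<m} = prod_list (map (\<lambda>i. B $$ (i, i)) [0..<m])"
proof -
  have "det (submatrix B {0..<m} (id ` {0..<m})) = prod_list (map (\<lambda>i. B $$ (i, id i)) [0..<m])"
    by (rule tri_det[OF B ut _ _ _ m]) (use m in \<open>auto simp: strict_mono_on_def\<close>)
  thus ?thesis unfolding topm_def by simp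
qed

lemma top_gap:
  fixes B :: "'a::field mat"
  assumes B: "B \<in> carrier_mat n n" and ut: "upper_triangular B" and jn: "Suc j < n"
  shows "topm B (insert (Suc j) {0..<j}) = prod_list (map (\<lambda>i. B $$ (i, i)) [0..<j]) * B $$ (j, Suc j)"
proof -
  let ?g = "\<lambda>i. if i < j then i else Suc j"
  have img: "?g ` {0..<Suc j} = insert (Suc j) {0..<j}"
  proof
    show "?g ` {0..<Suc j} \<subseteq> insert (Suc j) {0..<j}" by auto
    show "insert (Suc j) {0..<j} \<subseteq> ?g ` {0..<Suc j}"
    proof
      fix x assume "x \<in> insert (Suc j) {0..<j}"
      thus "x \<in> ?g ` {0..<Suc j}"
      proof
        assume "x = Suc j" thus ?thesis by (intro image_eqI[of _ _ j]) auto
      next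
        assume "x \<in> {0..<j}" thus ?thesis by (intro image_eqI[of _ _ x]) auto
      qed
    qed
  qed
  have c: "card (insert (Suc j) {0..<j}) = Suc j" by simp
  have "det (submatrix B {0..<Suc j} (?g ` {0..<Suc j})) = prod_list (map (\<lambda>i. B $$ (i, ?g i)) [0..<Suc j])"
    by (rule tri_det[OF B ut]) (use jn in \<open>auto simp: strict_mono_on_def\<close>)
  also have "map (\<lambda>i. B $$ (i, ?g i)) [0..<Suc j] = map (\<lambda>i. B $$ (i, i)) [0..<j] @ [B $$ (j, Suc j)]"
    by simp
  finally show ?thesis unfolding topm_def img c by simp
qed

lemma claim5:
  fixes B :: "'a::field mat"
  assumes V: "nonarch_valuation val" and G: "good val n B" and jn: "Suc j < n"
  shows "B $$ (j, Suc j) \<noteq> 0 \<and> val (B $$ (j, Suc j)) \<le> val (B $$ (Suc j, Suc j))"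
proof -
  have B: "B \<in> carrier_mat n n" and ut: "upper_triangular B" using G unfolding good_def by auto
  let ?P = "prod_list (map (\<lambda>i. B $$ (i, i)) [0..<j])"
  let ?a = "B $$ (j, j)" and ?b = "B $$ (j, Suc j)" and ?d = "B $$ (Suc j, Suc j)"
  have t0: "topm B {0..<j} = ?P" using top_diag[OF B ut, of j] jn by simp
  have t1: "topm B {0..<Suc j} = ?P * ?a" using top_diag[OF B ut, of "Suc j"] jn by simp
  have t2: "topm B {0..<Suc (Suc j)} = ?P * ?a * ?d" using top_diag[OF B ut, of "Suc (Suc j)"] jn by simp
  have t3: "topm B (insert (Suc j) {0..<j}) = ?P * ?b" using top_gap[OF B ut jn] .
  have nz: "\<And>X. X \<subseteq> {0..<n} \<Longrightarrow> topm B X \<noteq> 0" using G unfolding good_def by auto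
  have s0: "{0..<j} \<subseteq> {0..<n}" "{0..<Suc j} \<subseteq> {0..<n}" "{0..<Suc (Suc j)} \<subseteq> {0..<n}"
    "insert (Suc j) {0..<j} \<subseteq> {0..<n}" using jn by auto
  have "?P * ?a * ?d \<noteq> 0" using nz[OF s0(3)] t2 by simp
  hence nP: "?P \<noteq> 0" and na: "?a \<noteq> 0" and nd: "?d \<noteq> 0" by auto
  have "?P * ?b \<noteq> 0" using nz[OF s0(4)] t3 by simp
  hence nb: "?b \<noteq> 0" by auto
  have sub: "val (topm B {0..<Suc j}) + val (topm B (insert (Suc j) {0..<j})) \<le>
     val (topm B ({0..<Suc j} \<inter> insert (Suc j) {0..<j})) + val (topm B ({0..<Suc j} \<union> insert (Suc j) {0..<j}))"
    using G s0 unfolding good_def by blast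
  have i1: "{0..<Suc j} \<inter> insert (Suc j) {0..<j} = {0..<j}" by auto
  have i2: "{0..<Suc j} \<union> insert (Suc j) {0..<j} = {0..<Suc (Suc j)}" by auto
  have "val (?P * ?a) + val (?P * ?b) \<le> val ?P + val (?P * ?a * ?d)"
    using sub unfolding i1 i2 t0 t1 t2 t3 .
  hence "val ?P + val ?a + (val ?P + val ?b) \<le> val ?P + (val ?P + val ?a + val ?d)"
    by (simp add: val_mult[OF V])
  hence "ereal (real_of_ereal (val ?P)) + ereal (real_of_ereal (val ?a)) + (ereal (real_of_ereal (val ?P)) + ereal (real_of_ereal (val ?b)))
     \<le> ereal (real_of_ereal (val ?P)) + (ereal (real_of_ereal (val ?P)) + ereal (real_of_ereal (val ?a)) + ereal (real_of_ereal (val ?d)))"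
    using val_fin[OF V nP] val_fin[OF V na] val_fin[OF V nb] val_fin[OF V nd] by simp
  hence "real_of_ereal (val ?b) \<le> real_of_ereal (val ?d)" by simp
  hence "val ?b \<le> val ?d" using val_fin[OF V nb] val_fin[OF V nd] by (metis ereal_less_eq(3))
  thus ?thesis using nb by simp
qed



lemma good_Bt:
  fixes B :: "'a::field mat"
  assumes V: "nonarch_valuation val" and G: "good val n B" and jn: "Suc j < n"
    and c: "c = B $$ (Suc j, Suc j) / B $$ (j, Suc j)"
  shows "good val n (Bt n B j c)"
proof -
  have B: "B \<in> carrier_mat n n" and ut: "upper_triangular B" using G unfolding good_def by auto
  have nb: "B $$ (j, Suc j) \<noteq> 0" using claim5[OF V G jn] by simp
  let ?BB = "Bt n B j c"
  have ut': "upper_triangular ?BB"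
  proof (rule upper_triangularI)
    fix i l assume li: "l < i" and "i < dim_row ?BB"
    hence i: "i < n" using Bt_carrier by (metis carrier_matD(1))
    have l: "l < n" using li i by simp
    have swl: "sw j l < n" using sw_lt[OF l jn] .
    have e: "?BB $$ (i,l) = B $$ (i, sw j l) - (if i = Suc j then c * B $$ (j, sw j l) else 0)"
      using Bt_index[OF i l, of B j c] EB_index[OF i swl, of B j c] by simp
    have Bz: "\<And>a b. b < a \<Longrightarrow> a < n \<Longrightarrow> B $$ (a,b) = 0" using ut B upper_triangularD by (metis carrier_matD(1))
    show "?BB $$ (i,l) = 0"
    proof (cases "i = Suc j")
      case True
      show ?thesis
      proof (cases "l = j")
        case True
        have "sw j l = Suc j" using True by (simp add: sw_def)
        thus ?thesis using e \<open>i = Suc j\<close> c nb by simp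
      next
        case False
        hence "l < j" using li \<open>i = Suc j\<close> by simp
        hence "sw j l = l" by (simp add: sw_def)
        thus ?thesis using e \<open>i = Suc j\<close> Bz[of l "Suc j"] Bz[of l j] \<open>l < j\<close> jn by simp
      qed
    next
      case False
      have "sw j l < i" using li False unfolding sw_def by auto
      thus ?thesis using e False Bz[OF _ i] by simp
    qed
  qed
  have tv: "\<And>X. X \<subseteq> {0..<n} \<Longrightarrow> val (topm ?BB X) = val (topm B (sw j ` X))"
  proof -
    fix X assume X: "X \<subseteq> {0..<n}"
    show "val (topm ?BB X) = val (topm B (sw j ` X))"
      using top_Bt[OF B jn X, of c] val_neg[OF V] by metis
  qed
  have nz: "\<And>X. X \<subseteq> {0..<n} \<Longrightarrow> topm ?BB X \<noteq> 0"
  proof -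
    fix X assume X: "X \<subseteq> {0..<n}"
    have "topm B (sw j ` X) \<noteq> 0" using G sw_image_sub[OF X jn] unfolding good_def by auto
    thus "topm ?BB X \<noteq> 0" using top_Bt[OF B jn X, of c] by auto
  qed
  have sm: "val (topm ?BB X) + val (topm ?BB Y) \<le> val (topm ?BB (X \<inter> Y)) + val (topm ?BB (X \<union> Y))"
    if X: "X \<subseteq> {0..<n}" and Y: "Y \<subseteq> {0..<n}" for X Y
  proof -
    have XY: "X \<inter> Y \<subseteq> {0..<n}" "X \<union> Y \<subseteq> {0..<n}" using X Y by auto
    have "sw j ` (X \<inter> Y) = sw j ` X \<inter> sw j ` Y" using sw_inj by (simp add: image_Int)
    moreover have "sw j ` (X \<union> Y) = sw j ` X \<union> sw j ` Y" by (rule image_Un)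
    moreover have "val (topm B (sw j ` X)) + val (topm B (sw j ` Y)) \<le>
        val (topm B (sw j ` X \<inter> sw j ` Y)) + val (topm B (sw j ` X \<union> sw j ` Y))"
      using G sw_image_sub[OF X jn] sw_image_sub[OF Y jn] unfolding good_def by blast
    ultimately show ?thesis using tv[OF X] tv[OF Y] tv[OF XY(1)] tv[OF XY(2)] by simp
  qed
  show ?thesis unfolding good_def using Bt_carrier ut' nz sm by blast
qed

lemma exists_gap:
  fixes S :: "nat set"
  assumes fin: "finite S" and ne: "S \<noteq> {0..<card S}"
  shows "\<exists>j. j \<notin> S \<and> Suc j \<in> S"
proof (rule ccontr)
  assume "\<not> ?thesis"
  hence step: "\<And>j. j \<notin> S \<Longrightarrow> Suc j \<notin> S" by auto
  have "\<exists>x. x \<notin> S" using fin by (meson ex_new_if_finite infinite_UNIV_nat)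
  define z where "z = (LEAST x. x \<notin> S)"
  have zS: "z \<notin> S" unfolding z_def using \<open>\<exists>x. x \<notin> S\<close> by (rule LeastI_ex)
  have below: "\<And>x. x < z \<Longrightarrow> x \<in> S" unfolding z_def using not_less_Least by blast
  have above: "\<And>d. z + d \<notin> S"
  proof -
    fix d show "z + d \<notin> S" by (induction d) (use zS step in auto)
  qed
  have "S = {0..<z}"
  proof
    show "S \<subseteq> {0..<z}"
    proof
      fix x assume "x \<in> S"
      have "\<not> z \<le> x" using above[of "x - z"] \<open>x \<in> S\<close> by auto
      thus "x \<in> {0..<z}" by simp
    qed
    show "{0..<z} \<subseteq> S" using below by auto
  qed
  thus False using ne by simp
qed

lemma sum_sw_lt:
  fixes S :: "nat set"
  assumes fin: "finite S" and j: "j \<notin> S" and sj: "Suc j \<in> S"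
  shows "\<Sum> (sw j ` S) < \<Sum> S"
proof -
  have "\<Sum> (sw j ` S) = (\<Sum>s\<in>S. sw j s)"
    using sum.reindex[OF inj_on_subset[OF sw_inj[of j] subset_UNIV], of id S] by simp
  also have "\<dots> < (\<Sum>s\<in>S. s)"
  proof (rule sum_strict_mono_ex1[OF fin])
    show "\<forall>s\<in>S. sw j s \<le> s" using j unfolding sw_def by auto
    show "\<exists>s\<in>S. sw j s < s" using sj by (intro bexI[of _ "Suc j"]) (auto simp: sw_def)
  qed
  finally show ?thesis by simp
qed

lemma main:
  fixes val :: "'a::field \<Rightarrow> ereal"
  assumes V: "nonarch_valuation val"
  shows "\<forall>B S T. good val n B \<longrightarrow> S \<subseteq> {0..<n} \<longrightarrow> T \<subseteq> {0..<n} \<longrightarrow> card T = card S \<longrightarrow>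
     \<Sum> T + \<Sum> S = m \<longrightarrow> val (topm B S) \<le> val (det (submatrix B T S))"
proof (induction m rule: less_induct)
  case (less m)
  show ?case
  proof (intro allI impI)
    fix B :: "'a mat" and S T
    assume G: "good val n B" and S: "S \<subseteq> {0..<n}" and T: "T \<subseteq> {0..<n}" and cTS: "card T = card S"
      and m: "\<Sum> T + \<Sum> S = m"
    have B: "B \<in> carrier_mat n n" and ut: "upper_triangular B" using G unfolding good_def by auto
    have finS: "finite S" using S finite_subset by blast
    have finT: "finite T" using T finite_subset by blast
    show "val (topm B S) \<le> val (det (submatrix B T S))"
    proof (cases "S = {0..<card S}")
      case True
      show ?thesis
      proof (cases "T = S")
        case True thus ?thesis using \<open>S = {0..<card S}\<close> unfolding topm_def by simp
      next
        case False
        have "det (submatrix B T {0..<card S}) = 0"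
          by (rule base_zero[OF B ut T card_le_n[OF S]]) (use cTS False \<open>S = {0..<card S}\<close> in auto)
        hence "det (submatrix B T S) = 0" using \<open>S = {0..<card S}\<close> by simp
        thus ?thesis using val_zero[OF V] by simp
      qed
    next
      case False
      then obtain j where jS: "j \<notin> S" and sjS: "Suc j \<in> S" using exists_gap[OF finS] by blast
      have jn: "Suc j < n" using sjS S by auto
      define c where "c = B $$ (Suc j, Suc j) / B $$ (j, Suc j)"
      have c5: "B $$ (j, Suc j) \<noteq> 0 \<and> val (B $$ (j, Suc j)) \<le> val (B $$ (Suc j, Suc j))"
        using claim5[OF V G jn] .
      have cval: "0 \<le> val c"
      proof -
        have eq: "B $$ (Suc j, Suc j) = c * B $$ (j, Suc j)" using c5 unfolding c_def by simp
        hence "val (B $$ (Suc j, Suc j)) = val c + val (B $$ (j, Suc j))" using val_mult[OF V] by simp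
        hence "val (B $$ (j, Suc j)) \<le> val c + val (B $$ (j, Suc j))" using c5 by simp
        moreover obtain r where "val (B $$ (j, Suc j)) = ereal r" using val_fin[OF V] c5 by blast
        ultimately show ?thesis
          by (cases "val c") auto
      qed
      let ?BB = "Bt n B j c"
      let ?SS = "sw j ` S"
      have G': "good val n ?BB" using good_Bt[OF V G jn c_def] .
      have S': "?SS \<subseteq> {0..<n}" using sw_image_sub[OF S jn] .
      have cS': "card T = card ?SS" using cTS sw_card by simp
      have lt1: "\<Sum> T + \<Sum> ?SS < m" using sum_sw_lt[OF finS jS sjS] m by simp
      have IH1: "val (topm ?BB ?SS) \<le> val (det (submatrix ?BB T ?SS))"
        using less.IH[OF lt1] G' S' T cS' by blast
      have bk: "sw j ` ?SS = S" by (simp add: image_image)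
      have e1: "val (topm ?BB ?SS) = val (topm B S)"
        using top_Bt[OF B jn S', of c] val_neg[OF V] bk by metis
      have e2: "val (det (submatrix ?BB T ?SS)) = val (det (submatrix (EB n B j c) T S))"
        using swap_det[OF B jn T S' cS', of c] val_neg[OF V] bk by metis
      have key: "val (topm B S) \<le> val (det (submatrix (EB n B j c) T S))" using IH1 e1 e2 by simp
      show ?thesis
      proof (cases "Suc j \<in> T \<and> j \<notin> T")
        case True
        let ?TT = "sw j ` T"
        have T': "?TT \<subseteq> {0..<n}" using sw_image_sub[OF T jn] .
        have cT': "card ?TT = card S" using cTS sw_card by simp
        have "\<Sum> ?TT < \<Sum> T" using sum_sw_lt[OF finT] True by blast
        hence lt2: "\<Sum> ?TT + \<Sum> S < m" using m by simp
        have IH2: "val (topm B S) \<le> val (det (submatrix B ?TT S))"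
          using less.IH[OF lt2] G S T' cT' by blast
        have "det (submatrix (EB n B j c) T S) = det (submatrix B T S) + (- c) * det (submatrix B ?TT S)"
          using rowop_b[OF B jn T S cTS] True by blast
        hence "det (submatrix B T S) = det (submatrix (EB n B j c) T S) + c * det (submatrix B ?TT S)"
          by (simp add: algebra_simps)
        thus ?thesis using val_comb[OF V cval key IH2] by simp
      next
        case False
        have "det (submatrix (EB n B j c) T S) = det (submatrix B T S)"
          using rowop_a[OF B jn T S cTS] False by blast
        thus ?thesis using key by simp
      qed
    qed
  qed
qed



theorem lemma3p4:
  fixes val :: "'a::field \<Rightarrow> ereal" and B :: "'a mat" and n :: nat
  assumes "nonarch_valuation val"
    and "B \<in> carrier_mat n n"
    and "upper_triangular B"
    and "\<forall>S. S \<subseteq> {0..<n} \<longrightarrow>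
           nu val (det (submatrix B {0..<card S} S)) \<noteq> \<infinity> \<and>
           nu val (det (submatrix B {0..<card S} S)) \<noteq> -\<infinity>"
    and "submodular_on n (\<lambda>S. real_of_ereal (nu val (det (submatrix B {0..<card S} S))))"
    and "S \<subseteq> {0..<n}" and "T \<subseteq> {0..<n}" and "card S = card T"
  shows "nu val (det (submatrix B {0..<card S} S)) \<ge> nu val (det (submatrix B T S))"
proof -
  note V = assms(1)
  have nuv: "\<And>x. nu val x = - val x" unfolding nu_def by simp
  have nz: "\<And>X. X \<subseteq> {0..<n} \<Longrightarrow> topm B X \<noteq> 0"
  proof -
    fix X assume "X \<subseteq> {0..<n}"
    hence "nu val (topm B X) \<noteq> -\<infinity>" using assms(4) unfolding topm_def by blast
    hence "val (topm B X) \<noteq> \<infinity>" using nuv by simp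
    thus "topm B X \<noteq> 0" using val_zero[OF V] by auto
  qed
  have rv: "\<And>X. X \<subseteq> {0..<n} \<Longrightarrow> real_of_ereal (nu val (topm B X)) = - real_of_ereal (val (topm B X))"
    using nuv by simp
  have sub: "val (topm B X) + val (topm B Y) \<le> val (topm B (X \<inter> Y)) + val (topm B (X \<union> Y))"
    if X: "X \<subseteq> {0..<n}" and Y: "Y \<subseteq> {0..<n}" for X Y
  proof -
    have XY: "X \<inter> Y \<subseteq> {0..<n}" "X \<union> Y \<subseteq> {0..<n}" using X Y by auto
    have "real_of_ereal (nu val (topm B (X \<inter> Y))) + real_of_ereal (nu val (topm B (X \<union> Y)))
       \<le> real_of_ereal (nu val (topm B X)) + real_of_ereal (nu val (topm B Y))"
      using assms(5) X Y unfolding submodular_on_def topm_def by blast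
    hence r: "real_of_ereal (val (topm B X)) + real_of_ereal (val (topm B Y))
       \<le> real_of_ereal (val (topm B (X \<inter> Y))) + real_of_ereal (val (topm B (X \<union> Y)))"
      using rv[OF X] rv[OF Y] rv[OF XY(1)] rv[OF XY(2)] by simp
    show ?thesis
      using r val_fin[OF V nz[OF X]] val_fin[OF V nz[OF Y]] val_fin[OF V nz[OF XY(1)]] val_fin[OF V nz[OF XY(2)]]
      by (metis ereal_less_eq(3) plus_ereal.simps(1))
  qed
  have G: "good val n B" unfolding good_def using assms(2,3) nz sub by blast
  have "val (topm B S) \<le> val (det (submatrix B T S))"
    using main[OF V, of n "\<Sum> T + \<Sum> S"] G assms(6,7,8) by auto
  thus ?thesis using nuv unfolding topm_def by simp
qed

end
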